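(* Let $s,t$ be real numbers with $t>0$ and $s>1+t$, and put \[ \mathcal{S}(s,t)=\sum_{p}\frac{p^s}{p^s-1}\cdot\frac{p^t}{p^s-1+p^t}\ln p,\qquad \mathcal{T}(s,t)=\sum_{p}\frac{p^t}{p^s-1+p^t}\ln p, \] where both sums run over all primes $p$. Let $a,b$ be coprime positive integers and $c=a+b$, and suppose that $c<R(c)^{\mathcal{S}(s,t)/\mathcal{T}(s,t)}$. Then \[ a+b<R(abc)^{2}. \]
   Context: For a positive integer $n$, $R(n)$ denotes the radical of $n$, i.e. the product of the distinct primes dividing $n$ (with $R(1)=1$). For $t>0$ and $s>1+t$ the two series defining $\mathcal{S}(s,t)$ and $\mathcal{T}(s,t)$ converge. *)

theory Defs
  imports "HOL-Analysis.Analysis" "HOL-Computational_Algebra.Primes"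
begin

definition radical :: "nat \<Rightarrow> nat" where
  "radical n = (\<Prod>p\<in>prime_factors n. p)"

definition calS :: "real \<Rightarrow> real \<Rightarrow> real" where
  "calS s t = (\<Sum>\<^sub>\<infinity>p\<in>{p::nat. prime p}.
      (real p powr s / (real p powr s - 1)) *
      (real p powr t / (real p powr s - 1 + real p powr t)) * ln (real p))"

definition calT :: "real \<Rightarrow> real \<Rightarrow> real" where
  "calT s t = (\<Sum>\<^sub>\<infinity>p\<in>{p::nat. prime p}.
      (real p powr t / (real p powr s - 1 + real p powr t)) * ln (real p))"

end

theory Submission
  imports Defs
begin

lemma term_bound:
  fixes s t :: real and p :: nat
  assumes "t > 0" "s > 1 + t" "prime p"
  shows "0 \<le> real p powr t / (real p powr s - 1 + real p powr t) * ln (real p)"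
    and "(real p powr s / (real p powr s - 1)) *
      (real p powr t / (real p powr s - 1 + real p powr t)) * ln (real p)
      \<le> 2 * (real p powr t / (real p powr s - 1 + real p powr t) * ln (real p))"
proof -
  have p2: "real p \<ge> 2" using prime_ge_2_nat[OF assms(3)] by simp
  have "real p powr 1 \<le> real p powr s"
    using p2 assms by (intro powr_mono) auto
  hence ps: "real p powr s \<ge> 2" using p2 by simp
  have pt: "real p powr t > 0" using p2 by simp
  have ln: "ln (real p) \<ge> 0" using p2 by simp
  have T0: "0 \<le> real p powr t / (real p powr s - 1 + real p powr t) * ln (real p)"
    using ps pt ln by (intro mult_nonneg_nonneg divide_nonneg_nonneg) auto
  show "0 \<le> real p powr t / (real p powr s - 1 + real p powr t) * ln (real p)" by (fact T0)
  have x: "real p powr s / (real p powr s - 1) \<le> 2"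
    using ps by (simp add: divide_simps)
  show "(real p powr s / (real p powr s - 1)) *
      (real p powr t / (real p powr s - 1 + real p powr t)) * ln (real p)
      \<le> 2 * (real p powr t / (real p powr s - 1 + real p powr t) * ln (real p))"
    using mult_right_mono[OF x T0] by (simp add: mult.assoc)
qed

lemma ratio_le:
  fixes s t :: real
  assumes "t > 0" "s > 1 + t"
  shows "calS s t / calT s t \<le> 2"
proof (cases "calT s t = 0")
  case True thus ?thesis by simp
next
  case False
  let ?f = "\<lambda>p::nat. real p powr t / (real p powr s - 1 + real p powr t) * ln (real p)"
  let ?g = "\<lambda>p::nat. (real p powr s / (real p powr s - 1)) *
      (real p powr t / (real p powr s - 1 + real p powr t)) * ln (real p)"
  have sT: "?f summable_on {p. prime p}"
    using False unfolding calT_def by (meson infsum_not_exists)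
  have T0: "calT s t \<ge> 0" unfolding calT_def
    by (rule infsum_nonneg) (use term_bound(1)[OF assms] in auto)
  hence Tpos: "calT s t > 0" using False by simp
  have "calS s t \<le> 2 * calT s t"
  proof (cases "?g summable_on {p. prime p}")
    case True
    have "calS s t \<le> (\<Sum>\<^sub>\<infinity>p\<in>{p::nat. prime p}. 2 * ?f p)"
      unfolding calS_def
      by (rule infsum_mono[OF True summable_on_cmult_right[OF sT]])
         (use term_bound(2)[OF assms] in auto)
    also have "\<dots> = 2 * calT s t" unfolding calT_def by (rule infsum_cmult_right') 
    finally show ?thesis .
  next
    case False
    hence "calS s t = 0" unfolding calS_def by (simp add: infsum_not_exists)
    thus ?thesis using T0 by simp
  qed
  thus ?thesis using Tpos by (simp add: divide_simps)
qed

lemma radical_pos: "radical n \<ge> 1"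
  unfolding radical_def
  by (metis One_nat_def Suc_leI in_prime_factors_imp_prime prime_gt_0_nat prod_pos)

lemma radical_mono:
  assumes "c > 0" "c dvd m" "m > 0"
  shows "radical c \<le> radical m"
proof -
  have "prime_factors c \<subseteq> prime_factors m"
    using assms by (auto intro: dvd_trans simp: in_prime_factors_iff)
  hence "radical c dvd radical m" unfolding radical_def
    by (intro prod_dvd_prod_subset) auto
  moreover have "radical m > 0" using radical_pos[of m] by simp
  ultimately show ?thesis by (rule dvd_imp_le)
qed

theorem theorem2:
  fixes s t :: real and a b c :: nat
  assumes "t > 0" and "s > 1 + t"
    and "a > 0" and "b > 0" and "coprime a b" and "c = a + b"
    and "real c < real (radical c) powr (calS s t / calT s t)"
  shows "a + b < (radical (a * b * c))^2"
proof -
  have R1: "real (radical c) \<ge> 1" using radical_pos[of c] by simp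
  have "real (radical c) powr (calS s t / calT s t) \<le> real (radical c) powr 2"
    using R1 ratio_le[OF assms(1,2)] by (intro powr_mono) auto
  also have "\<dots> = real (radical c ^ 2)" using R1 by (simp add: powr_realpow)
  finally have "real c < real (radical c ^ 2)" using assms(7) by linarith
  hence "c < radical c ^ 2" by linarith
  also have "radical c \<le> radical (a * b * c)"
    using assms by (intro radical_mono) auto
  hence "radical c ^ 2 \<le> radical (a * b * c) ^ 2" by (rule power_mono) simp
  finally show ?thesis using assms(6) by simp
qed

end
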